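(* Let $1\le t_1<t_2$ and $n\ge t_1+t_2$ be integers, and let $G=G_n\langle t_1,t_2\rangle$. If $t_2\ne 2t_1$, then $G$ contains a hole of length $(t_1+t_2)/\gcd(t_1,t_2)$.
   Context: For integers $n\ge 2$, $k\ge 1$ and $1\le t_1<t_2<\cdots<t_k\le n-1$, the Toeplitz graph $G_n\langle t_1,\ldots,t_k\rangle$ is the simple graph with vertex set $[n]=\{1,\ldots,n\}$ in which two distinct vertices $i,j$ are adjacent if and only if $|i-j|\in\{t_1,\ldots,t_k\}$. A hole is an induced (chordless) cycle of length at least $4$. *)

theory Defs
  imports Main
begin

definition toeplitz_adj :: "nat \<Rightarrow> nat set \<Rightarrow> nat \<Rightarrow> nat \<Rightarrow> bool" where
  "toeplitz_adj n T i j \<longleftrightarrow> i \<in> {1..n} \<and> j \<in> {1..n} \<and> i \<noteq> j \<and>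
     (if i \<le> j then j - i else i - j) \<in> T"

definition is_hole :: "'a set \<Rightarrow> ('a \<Rightarrow> 'a \<Rightarrow> bool) \<Rightarrow> 'a list \<Rightarrow> bool" where
  "is_hole V E vs \<longleftrightarrow> length vs \<ge> 4 \<and> distinct vs \<and> set vs \<subseteq> V \<and>
     (\<forall>i<length vs. \<forall>j<length vs.
        E (vs ! i) (vs ! j) \<longleftrightarrow> (j = (i + 1) mod length vs \<or> i = (j + 1) mod length vs))"

definition has_hole_of_length :: "'a set \<Rightarrow> ('a \<Rightarrow> 'a \<Rightarrow> bool) \<Rightarrow> nat \<Rightarrow> bool" where
  "has_hole_of_length V E L \<longleftrightarrow> (\<exists>vs. is_hole V E vs \<and> length vs = L)"

end

theory Submission
  imports Defs "HOL-Number_Theory.Cong"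
begin

lemma adj_char:
  fixes r s t1 t2 :: nat
  assumes "r < t1+t2" "s < t1+t2" "0<t1" "t1<t2"
  shows "(r \<noteq> s \<and> (if r \<le> s then s - r else r - s) \<in> {t1,t2}) \<longleftrightarrow>
         (s = (r+t1) mod (t1+t2) \<or> r = (s+t1) mod (t1+t2))"
proof -
  have m: "\<And>x. x < 2*(t1+t2) \<Longrightarrow> x mod (t1+t2) = (if x < t1+t2 then x else x - (t1+t2))"
    by (simp add: le_mod_geq)
  have "(r+t1) mod (t1+t2) = (if r+t1 < t1+t2 then r+t1 else r+t1 - (t1+t2))"
    using assms by (intro m) auto
  moreover have "(s+t1) mod (t1+t2) = (if s+t1 < t1+t2 then s+t1 else s+t1 - (t1+t2))"
    using assms by (intro m) auto
  ultimately show ?thesis using assms by auto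
qed

lemma cong_char:
  fixes t1 t2 x y :: nat
  assumes "0 < t1"
  defines "d \<equiv> gcd t1 t2"
  defines "L \<equiv> (t1+t2) div d"
  shows "(x*t1) mod (t1+t2) = (y*t1) mod (t1+t2) \<longleftrightarrow> x mod L = y mod L"
proof -
  have d0: "d > 0" using assms d_def by simp
  define a where "a = t1 div d"
  define b where "b = t2 div d"
  have ta: "t1 = a*d" using a_def d_def by simp
  have tb: "t2 = b*d" using b_def d_def by simp
  have Lab: "L = a+b" using L_def ta tb d0 by (simp add: add_mult_distrib[symmetric])
  have cop: "coprime a b" using a_def b_def d_def assms div_gcd_coprime by blast
  have copL: "coprime a L" using cop Lab by (simp add: coprime_iff_gcd_eq_1)
  have m: "t1+t2 = L*d" using Lab ta tb by (simp add: add_mult_distrib)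
  have "(x*t1) mod (t1+t2) = ((x*a) mod L) * d" using m ta by (simp add: mult.assoc mod_mult_mult2)
  moreover have "(y*t1) mod (t1+t2) = ((y*a) mod L) * d" using m ta by (simp add: mult.assoc mod_mult_mult2)
  ultimately have "(x*t1) mod (t1+t2) = (y*t1) mod (t1+t2) \<longleftrightarrow> [x*a = y*a] (mod L)"
    using d0 by (simp add: cong_def)
  also have "\<dots> \<longleftrightarrow> [x = y] (mod L)" using copL
    by (simp add: cong_mult_rcancel_nat coprime_commute)
  finally show ?thesis by (simp add: cong_def)
qed

theorem lemma3p2:
  fixes n t1 t2 :: nat
  assumes "1 \<le> t1" and "t1 < t2" and "n \<ge> t1 + t2" and "t2 \<noteq> 2 * t1"
  shows "has_hole_of_length {1..n} (toeplitz_adj n {t1, t2}) ((t1 + t2) div gcd t1 t2)"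
proof -
  define d where "d = gcd t1 t2"
  define L where "L = (t1+t2) div d"
  define m where "m = t1+t2"
  have d0: "d > 0" using assms d_def by simp
  define a where "a = t1 div d"
  define b where "b = t2 div d"
  have ta: "t1 = a*d" using a_def d_def by simp
  have tb: "t2 = b*d" using b_def d_def by simp
  have Lab: "L = a+b" using L_def ta tb d0 by (simp add: add_mult_distrib[symmetric])
  have cop: "coprime a b" using a_def b_def d_def assms div_gcd_coprime[of t1 t2] by auto
  have a1: "a \<ge> 1" using ta assms by (cases a) auto
  have ab: "a < b" using ta tb assms d0 by simp
  have L4: "L \<ge> 4"
  proof (rule ccontr)
    assume "\<not> L \<ge> 4"
    then have "a = 1" "b = 2" using Lab a1 ab by linarith+
    then show False using ta tb assms by simp
  qed
  define f where "f k = 1 + (k*t1) mod m" for k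
  define vs where "vs = map f [0..<L]"
  have len: "length vs = L" by (simp add: vs_def)
  have nth: "\<And>i. i < L \<Longrightarrow> vs ! i = f i" by (simp add: vs_def)
  have m0: "m > 0" using assms m_def by simp
  have feq: "\<And>i j. i < L \<Longrightarrow> j < L \<Longrightarrow> f i = f j \<longleftrightarrow> i = j"
  proof -
    fix i j assume ij: "i < L" "j < L"
    have "(i*t1) mod m = (j*t1) mod m \<longleftrightarrow> i mod L = j mod L"
      using cong_char[of t1 i t2 j] assms by (simp add: m_def L_def d_def)
    then show "f i = f j \<longleftrightarrow> i = j" using ij by (simp add: f_def)
  qed
  have dist: "distinct vs" unfolding vs_def distinct_map
    by (auto intro!: inj_onI simp: feq)
  have sub: "set vs \<subseteq> {1..n}"
  proof
    fix v assume "v \<in> set vs"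
    then obtain k where "v = f k" by (auto simp: vs_def)
    moreover have "(k*t1) mod m < m" using m0 by simp
    ultimately have "v \<le> m" "v \<ge> 1" by (auto simp: f_def)
    then show "v \<in> {1..n}" using assms m_def by auto
  qed
  have adj: "toeplitz_adj n {t1,t2} (vs ! i) (vs ! j) \<longleftrightarrow>
      (j = (i + 1) mod L \<or> i = (j + 1) mod L)" if ij: "i < L" "j < L" for i j
  proof -
    define r where "r = (i*t1) mod m"
    define s where "s = (j*t1) mod m"
    have rm: "r < m" "s < m" using m0 by (auto simp: r_def s_def)
    have "toeplitz_adj n {t1,t2} (vs ! i) (vs ! j) \<longleftrightarrow>
          (r \<noteq> s \<and> (if r \<le> s then s - r else r - s) \<in> {t1,t2})"
    proof -
      have "vs ! i = 1 + r" "vs ! j = 1 + s" using ij by (auto simp: nth f_def r_def s_def)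
      moreover have "1 + r \<le> n" "1 + s \<le> n" using rm assms m_def by auto
      ultimately show ?thesis by (auto simp: toeplitz_adj_def)
    qed
    also have "\<dots> \<longleftrightarrow> (s = (r+t1) mod m \<or> r = (s+t1) mod m)"
      using adj_char[of r t1 t2 s] rm assms m_def by simp
    also have "(s = (r+t1) mod m) \<longleftrightarrow> j = (i+1) mod L"
    proof -
      have "(r+t1) mod m = ((i+1)*t1) mod m" by (simp add: r_def mod_add_right_eq add.commute)
      then have "(s = (r+t1) mod m) \<longleftrightarrow> j mod L = (i+1) mod L"
        using cong_char[of t1 j t2 "i+1"] assms by (simp add: s_def m_def L_def d_def)
      then show ?thesis using ij by simp
    qed
    also have "(r = (s+t1) mod m) \<longleftrightarrow> i = (j+1) mod L"
    proof -
      have "(s+t1) mod m = ((j+1)*t1) mod m" by (simp add: s_def mod_add_right_eq add.commute)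
      then have "(r = (s+t1) mod m) \<longleftrightarrow> i mod L = (j+1) mod L"
        using cong_char[of t1 i t2 "j+1"] assms by (simp add: r_def m_def L_def d_def)
      then show ?thesis using ij by simp
    qed
    finally show ?thesis .
  qed
  have "is_hole {1..n} (toeplitz_adj n {t1, t2}) vs"
    unfolding is_hole_def using L4 dist sub adj len by simp
  then show ?thesis unfolding has_hole_of_length_def using len L_def d_def by auto
qed

end
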